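(* Let $0<d<\pi/2$, $\mathscr{D}_d=\{\zeta\in\mathbb{C}:|\Im\zeta|<d\}$, $\mathscr{D}_d^{-}=\{\zeta\in\mathscr{D}_d:\Re\zeta<0\}$, $\mathscr{D}_d^{+}=\{\zeta\in\mathscr{D}_d:\Re\zeta\ge0\}$. Assume $f$ is analytic on $\sinh(\mathscr{D}_d)$ and there are constants $K,\alpha,\beta>0$ with $|f(z)|\le K|1+z^2|^{-(\alpha+1)/2}$ for all $z\in\sinh(\mathscr{D}_d^-)$ and $|f(z)|\le K|1+z^2|^{-(\beta+1)/2}$ for all $z\in\sinh(\mathscr{D}_d^+)$. Let $\mu=\min\{\alpha,\beta\}$, $\nu=\max\{\alpha,\beta\}$. Then $F(\zeta)=f(\sinh\zeta)\cosh\zeta$ belongs to $\mathbf{L}^{\mathrm{SE}}_{L,R,\alpha,\beta}(\mathscr{D}_d)$ with $L=2^{\nu}K/(\cos d)^{(\nu-\mu)/2}$ and $R=2^{\nu}K$.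
   Context: For positive $L,R,\alpha,\beta$ and $0<d<\pi/2$, $\mathbf{L}^{\mathrm{SE}}_{L,R,\alpha,\beta}(\mathscr{D}_d)$ is the set of functions $F$ analytic on $\mathscr{D}_d$ such that for all $\zeta\in\mathscr{D}_d$, $|F(\zeta)|\le L\,|1+e^{-2\zeta}|^{-\alpha/2}|1+e^{2\zeta}|^{-\beta/2}$, and for all $x\in\mathbb{R}$, $|F(x)|\le R\,(1+e^{-2x})^{-\alpha/2}(1+e^{2x})^{-\beta/2}$. *)

theory Defs
  imports "HOL-Analysis.Analysis"
begin

definition strip :: "real \<Rightarrow> complex set" where
  "strip d = {z. \<bar>Im z\<bar> < d}"

definition LSE :: "real \<Rightarrow> real \<Rightarrow> real \<Rightarrow> real \<Rightarrow> real \<Rightarrow> (complex \<Rightarrow> complex) set" where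
  "LSE L R \<alpha> \<beta> d = {F. F analytic_on strip d \<and>
     (\<forall>\<zeta>\<in>strip d. norm (F \<zeta>) \<le> L * norm (1 + exp (-2*\<zeta>)) powr (-\<alpha>/2) * norm (1 + exp (2*\<zeta>)) powr (-\<beta>/2)) \<and>
     (\<forall>x::real. norm (F (complex_of_real x)) \<le> R * (1 + exp (-2*x)) powr (-\<alpha>/2) * (1 + exp (2*x)) powr (-\<beta>/2))}"

end

theory Submission imports Defs begin
lemma key:
 fixes c cd K p q s :: real
 assumes c: "c>0" and cd: "0<cd" "cd\<le>1" and K: "K>0" and pq: "p>0" "q>0"
   and lo: "cd/2 \<le> c*exp s" and hi: "c*exp s \<le> 1"
 shows "K * c powr (-p) \<le> 2 powr (max p q) * K / cd powr ((max p q - min p q)/2) * (2*c*exp(-s)) powr (-p/2) * (2*c*exp s) powr (-q/2)"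
proof -
  define t where "t = ln c + s"
  have lt: "ln (c*exp s) = t" using c by (simp add: ln_mult t_def)
  have t1: "ln cd - ln 2 \<le> t"
  proof -
    have "ln (cd/2) \<le> ln (c*exp s)" using lo cd c by (subst ln_le_cancel_iff) auto
    thus ?thesis using lt cd by (simp add: ln_div)
  qed
  have t2: "t \<le> 0" using hi c lt by (metis ln_le_zero_iff mult_pos_pos exp_gt_zero)
  have lcd: "ln cd \<le> 0" using cd by simp
  have l2: "ln 2 > (0::real)" by simp
  have ineq: "0 \<le> (max p q - min p q)/2 * (ln 2 - ln cd) + (p - q)/2 * t"
  proof (cases "p \<ge> q")
    case True
    then have "(max p q - min p q)/2 * (ln 2 - ln cd) + (p - q)/2 * t = (p-q)/2 * (ln 2 - ln cd + t)"
      by (auto simp: max_def min_def field_simps)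
    also have "\<dots> \<ge> 0" using True t1 by (intro mult_nonneg_nonneg) auto
    finally show ?thesis by simp
  next
    case False
    then have "(max p q - min p q)/2 * (ln 2 - ln cd) + (p - q)/2 * t = (q-p)/2 * (ln 2 - ln cd) + (q-p)/2 * (-t)"
      by (auto simp: max_def min_def field_simps)
    also have "\<dots> \<ge> 0" using False t2 lcd l2 by (intro add_nonneg_nonneg mult_nonneg_nonneg) (auto simp del: ln_gt_zero_iff)
    finally show ?thesis by simp
  qed
  define m where "m = max p q"
  define e where "e = (max p q - min p q)/2"
  have f1: "c powr (-p) = exp (-p * ln c)" using c by (simp add: powr_def)
  have f2: "2 powr m = exp (m * ln 2)" by (simp add: powr_def)
  have f3: "cd powr e = exp (e * ln cd)" using cd by (simp add: powr_def)
  have f4: "(2*c*exp(-s)) powr (-p/2) = exp (-p/2 * (ln 2 + ln c - s))"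
    using c by (simp add: powr_def ln_mult)
  have f5: "(2*c*exp s) powr (-q/2) = exp (-q/2 * (ln 2 + ln c + s))"
    using c by (simp add: powr_def ln_mult)
  have fK: "K = exp (ln K)" using K by simp
  have "K * c powr (-p) = exp (ln K + -p * ln c)" by (subst fK) (simp only: f1 mult_exp_exp)
  also have "\<dots> \<le> exp (m * ln 2 + ln K - e * ln cd + -p/2 * (ln 2 + ln c - s) + -q/2 * (ln 2 + ln c + s))"
  proof -
    have "m * ln 2 + ln K - e * ln cd + -p/2 * (ln 2 + ln c - s) + -q/2 * (ln 2 + ln c + s) - (ln K + -p * ln c)
       = (m - (p+q)/2) * ln 2 - e * ln cd + (p - q)/2 * t"
      by (simp add: t_def field_simps)
    moreover have "m - (p+q)/2 = e" by (auto simp: m_def e_def max_def min_def field_simps)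
    moreover have "0 \<le> e * ln 2 - e * ln cd + (p - q)/2 * t"
      using ineq unfolding e_def[symmetric] by (simp add: right_diff_distrib)
    ultimately show ?thesis by simp
  qed
  also have "\<dots> = 2 powr m * K / cd powr e * (2*c*exp(-s)) powr (-p/2) * (2*c*exp s) powr (-q/2)"
    by (simp only: exp_add exp_diff f2 f3 f4 f5 fK[symmetric])
  finally show ?thesis by (simp add: m_def e_def)
qed
lemma cpx:
  fixes f :: "complex \<Rightarrow> complex" and \<zeta> :: complex and cd K \<alpha> \<beta> :: real
  assumes cd: "0 < cd" "cd \<le> cos (Im \<zeta>)" and K: "K > 0" and ab: "\<alpha> > 0" "\<beta> > 0"
    and fl: "Re \<zeta> < 0 \<Longrightarrow> norm (f (sinh \<zeta>)) \<le> K * norm (1 + sinh \<zeta> ^ 2) powr (-(\<alpha>+1)/2)"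
    and fr: "Re \<zeta> \<ge> 0 \<Longrightarrow> norm (f (sinh \<zeta>)) \<le> K * norm (1 + sinh \<zeta> ^ 2) powr (-(\<beta>+1)/2)"
  shows "norm (f (sinh \<zeta>) * cosh \<zeta>) \<le> 2 powr (max \<alpha> \<beta>) * K / cd powr ((max \<alpha> \<beta> - min \<alpha> \<beta>)/2)
            * norm (1 + exp (-2*\<zeta>)) powr (-\<alpha>/2) * norm (1 + exp (2*\<zeta>)) powr (-\<beta>/2)"
proof -
  define x where "x = Re \<zeta>"
  define c where "c = norm (cosh \<zeta>)"
  have cd1: "cd \<le> 1" using cd cos_le_one order_trans by blast
  have eA: "1 + exp (-2*\<zeta>) = 2 * exp (-\<zeta>) * cosh \<zeta>"
    by (simp add: cosh_field_def field_simps flip: exp_add)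
  have e1: "exp \<zeta> * exp (-\<zeta>) = 1" by (simp flip: exp_add)
  have e2: "exp \<zeta> * exp \<zeta> = exp (2*\<zeta>)" by (metis exp_add mult_2)
  have eB: "1 + exp (2*\<zeta>) = 2 * exp \<zeta> * cosh \<zeta>"
  proof -
    have "2 * exp \<zeta> * cosh \<zeta> = exp \<zeta> * (exp \<zeta> + exp (-\<zeta>))"
      by (simp add: cosh_field_def)
    also have "\<dots> = exp \<zeta> * exp \<zeta> + exp \<zeta> * exp (-\<zeta>)" by (simp only: distrib_left)
    also have "\<dots> = exp (2*\<zeta>) + 1" by (simp only: e1 e2)
    finally show ?thesis by simp
  qed
  have nA: "norm (1 + exp (-2*\<zeta>)) = 2 * c * exp (-x)"
    unfolding eA by (simp add: norm_mult c_def x_def)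
  have nB: "norm (1 + exp (2*\<zeta>)) = 2 * c * exp x"
    unfolding eB by (simp add: norm_mult c_def x_def)
  have hi: "c \<le> (exp x + exp (-x))/2"
  proof -
    have "c = norm (exp \<zeta> + exp (-\<zeta>)) / 2" by (simp add: c_def cosh_field_def)
    also have "\<dots> \<le> (norm (exp \<zeta>) + norm (exp (-\<zeta>))) / 2"
      by (intro divide_right_mono norm_triangle_ineq) auto
    finally show ?thesis by (simp add: x_def)
  qed
  have lo: "cd * ((exp x + exp (-x))/2) \<le> c"
  proof -
    have "Re (cosh \<zeta>) = cos (Im \<zeta>) * ((exp x + exp (-x))/2)"
      by (simp add: cosh_field_def Re_exp x_def field_simps)
    moreover have "cd * ((exp x + exp (-x))/2) \<le> cos (Im \<zeta>) * ((exp x + exp (-x))/2)"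
      using cd by (intro mult_right_mono) auto
    moreover have "Re (cosh \<zeta>) \<le> c" unfolding c_def using complex_Re_le_cmod .
    ultimately show ?thesis by linarith
  qed
  have cpos: "c > 0"
  proof -
    have "0 < cd * ((exp x + exp (-x))/2)" using cd by (intro mult_pos_pos) (auto intro: add_pos_pos)
    thus ?thesis using lo by linarith
  qed
  have n1: "norm (1 + sinh \<zeta> ^ 2) = c powr 2"
  proof -
    have "1 + sinh \<zeta> ^ 2 = cosh \<zeta> ^ 2" by (simp add: cosh_square_eq)
    hence "norm (1 + sinh \<zeta> ^ 2) = c ^ 2" by (simp add: c_def norm_power)
    thus ?thesis using cpos by (simp add: powr_numeral)
  qed
  have fb: "norm (f (sinh \<zeta>) * cosh \<zeta>) \<le> K * c powr (-p)"
    if "norm (f (sinh \<zeta>)) \<le> K * norm (1 + sinh \<zeta> ^ 2) powr (-(p+1)/2)" for p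
  proof -
    have "norm (f (sinh \<zeta>) * cosh \<zeta>) = norm (f (sinh \<zeta>)) * c" by (simp add: norm_mult c_def)
    also have "\<dots> \<le> K * norm (1 + sinh \<zeta> ^ 2) powr (-(p+1)/2) * c"
      using that cpos by (intro mult_right_mono) auto
    also have "\<dots> = K * (c powr (-(p+1)) * c powr 1)"
    proof -
      have "(c powr 2) powr (-(p+1)/2) = c powr (2 * (-(p+1)/2))" by (rule powr_powr)
      also have "\<dots> = c powr (-(p+1))" by (rule arg_cong[where f="\<lambda>e. c powr e"]) (simp add: field_simps)
      finally show ?thesis unfolding n1 using cpos by simp
    qed
    also have "\<dots> = K * c powr (-p)" by (simp only: powr_add[symmetric]) simp
    finally show ?thesis .
  qed
  have ex: "exp x * exp (-x) = 1" by (simp flip: exp_add)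
  show ?thesis
  proof (cases "x < 0")
    case True
    have u: "exp x \<le> 1" using True by simp
    have a1: "cd/2 \<le> c * exp x"
    proof -
      have "cd / 2 \<le> cd * ((exp x * exp x + 1)/2)" using cd by (simp add: field_simps)
      also have "\<dots> = cd * ((exp x + exp (-x))/2) * exp x" using ex by (simp add: field_simps)
      also have "\<dots> \<le> c * exp x" using lo by (intro mult_right_mono) auto
      finally show ?thesis .
    qed
    have a2: "c * exp x \<le> 1"
    proof -
      have "c * exp x \<le> (exp x + exp (-x))/2 * exp x" using hi by (intro mult_right_mono) auto
      also have "\<dots> = (exp x * exp x + 1)/2" using ex by (simp add: field_simps)
      also have "\<dots> \<le> 1" using u by (simp add: mult_le_one)
      finally show ?thesis .
    qed
    have "norm (f (sinh \<zeta>) * cosh \<zeta>) \<le> K * c powr (-\<alpha>)"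
      using fb fl True x_def by blast
    also have "\<dots> \<le> 2 powr (max \<alpha> \<beta>) * K / cd powr ((max \<alpha> \<beta> - min \<alpha> \<beta>)/2) * (2*c*exp(-x)) powr (-\<alpha>/2) * (2*c*exp x) powr (-\<beta>/2)"
      by (rule key[OF cpos cd(1) cd1 K ab a1 a2])
    finally show ?thesis unfolding nA nB .
  next
    case False
    have u: "exp (-x) \<le> 1" using False by simp
    have a1: "cd/2 \<le> c * exp (-x)"
    proof -
      have "cd / 2 \<le> cd * ((exp (-x) * exp (-x) + 1)/2)" using cd by (simp add: field_simps)
      also have "\<dots> = cd * ((exp x + exp (-x))/2) * exp (-x)" using ex by (simp add: field_simps)
      also have "\<dots> \<le> c * exp (-x)" using lo by (intro mult_right_mono) auto
      finally show ?thesis .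
    qed
    have a2: "c * exp (-x) \<le> 1"
    proof -
      have "c * exp (-x) \<le> (exp x + exp (-x))/2 * exp (-x)" using hi by (intro mult_right_mono) auto
      also have "\<dots> = (exp (-x) * exp (-x) + 1)/2" using ex by (simp add: field_simps)
      also have "\<dots> \<le> 1" using u by (simp add: mult_le_one)
      finally show ?thesis .
    qed
    have "norm (f (sinh \<zeta>) * cosh \<zeta>) \<le> K * c powr (-\<beta>)"
      using fb fr False x_def by force
    also have "\<dots> \<le> 2 powr (max \<beta> \<alpha>) * K / cd powr ((max \<beta> \<alpha> - min \<beta> \<alpha>)/2) * (2*c*exp(-(-x))) powr (-\<beta>/2) * (2*c*exp (-x)) powr (-\<alpha>/2)"
      by (rule key[OF cpos cd(1) cd1 K ab(2,1) a1 a2])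
    also have "\<dots> = 2 powr (max \<alpha> \<beta>) * K / cd powr ((max \<alpha> \<beta> - min \<alpha> \<beta>)/2) * (2*c*exp(-x)) powr (-\<alpha>/2) * (2*c*exp x) powr (-\<beta>/2)"
      by (simp add: max.commute min.commute mult_ac)
    finally show ?thesis unfolding nA nB .
  qed
qed
theorem lemma1:
  fixes f :: "complex \<Rightarrow> complex" and d K \<alpha> \<beta> :: real
  assumes "0 < d" "d < pi/2"
    and "f analytic_on (sinh ` strip d)"
    and "K > 0" "\<alpha> > 0" "\<beta> > 0"
    and "\<forall>z \<in> sinh ` {\<zeta>\<in>strip d. Re \<zeta> < 0}. norm (f z) \<le> K * norm (1 + z^2) powr (-(\<alpha>+1)/2)"
    and "\<forall>z \<in> sinh ` {\<zeta>\<in>strip d. Re \<zeta> \<ge> 0}. norm (f z) \<le> K * norm (1 + z^2) powr (-(\<beta>+1)/2)"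
  shows "(\<lambda>\<zeta>. f (sinh \<zeta>) * cosh \<zeta>) \<in>
           LSE (2 powr (max \<alpha> \<beta>) * K / (cos d) powr ((max \<alpha> \<beta> - min \<alpha> \<beta>)/2))
               (2 powr (max \<alpha> \<beta>) * K) \<alpha> \<beta> d"
proof -
  have an: "(\<lambda>\<zeta>. f (sinh \<zeta>) * cosh \<zeta>) analytic_on strip d"
  proof -
    have "(f \<circ> sinh) analytic_on strip d"
      by (rule analytic_on_compose[OF _ assms(3)]) (intro analytic_intros)
    hence "(\<lambda>\<zeta>. f (sinh \<zeta>)) analytic_on strip d" by (simp add: o_def)
    thus ?thesis by (intro analytic_intros)
  qed
  have bnd: "norm (f (sinh \<zeta>) * cosh \<zeta>) \<le> 2 powr (max \<alpha> \<beta>) * K / cd powr ((max \<alpha> \<beta> - min \<alpha> \<beta>)/2)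
            * norm (1 + exp (-2*\<zeta>)) powr (-\<alpha>/2) * norm (1 + exp (2*\<zeta>)) powr (-\<beta>/2)"
    if z: "\<zeta> \<in> strip d" and cd: "0 < cd" "cd \<le> cos (Im \<zeta>)" for \<zeta> cd
  proof (rule cpx[OF cd assms(4,5,6)])
    assume "Re \<zeta> < 0"
    then show "norm (f (sinh \<zeta>)) \<le> K * norm (1 + sinh \<zeta> ^ 2) powr (-(\<alpha>+1)/2)"
      using assms(7) z by blast
  next
    assume "Re \<zeta> \<ge> 0"
    then show "norm (f (sinh \<zeta>)) \<le> K * norm (1 + sinh \<zeta> ^ 2) powr (-(\<beta>+1)/2)"
      using assms(8) z by blast
  qed
  have cosd: "0 < cos d" using assms(1,2) by (intro cos_gt_zero_pi) auto
  have part2: "\<forall>\<zeta>\<in>strip d. norm (f (sinh \<zeta>) * cosh \<zeta>) \<le> 2 powr (max \<alpha> \<beta>) * K / (cos d) powr ((max \<alpha> \<beta> - min \<alpha> \<beta>)/2)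
            * norm (1 + exp (-2*\<zeta>)) powr (-\<alpha>/2) * norm (1 + exp (2*\<zeta>)) powr (-\<beta>/2)"
  proof
    fix \<zeta> assume z: "\<zeta> \<in> strip d"
    have "cos d \<le> cos \<bar>Im \<zeta>\<bar>"
      using z assms(1,2) by (intro cos_monotone_0_pi_le) (auto simp: strip_def)
    hence "cos d \<le> cos (Im \<zeta>)" by simp
    thus "norm (f (sinh \<zeta>) * cosh \<zeta>) \<le> 2 powr (max \<alpha> \<beta>) * K / (cos d) powr ((max \<alpha> \<beta> - min \<alpha> \<beta>)/2)
            * norm (1 + exp (-2*\<zeta>)) powr (-\<alpha>/2) * norm (1 + exp (2*\<zeta>)) powr (-\<beta>/2)"
      using bnd[OF z cosd] by simp
  qed
  have part3: "\<forall>x::real. norm (f (sinh (complex_of_real x)) * cosh (complex_of_real x)) \<le> (2 powr (max \<alpha> \<beta>) * K) * (1 + exp (-2*x)) powr (-\<alpha>/2) * (1 + exp (2*x)) powr (-\<beta>/2)"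
  proof
    fix x :: real
    have z: "complex_of_real x \<in> strip d" using assms(1) by (simp add: strip_def)
    have e1: "norm (1 + exp (-2 * complex_of_real x)) = 1 + exp (-2*x)"
    proof -
      have "complex_of_real (1 + exp (-2*x)) = 1 + exp (complex_of_real (-2*x))"
        by (simp only: of_real_add of_real_1 exp_of_real)
      moreover have "complex_of_real (-2*x) = -2 * complex_of_real x" by simp
      ultimately have "1 + exp (-2 * complex_of_real x) = complex_of_real (1 + exp (-2*x))" by simp
      thus ?thesis by (simp only: norm_of_real) (simp add: add_pos_pos)
    qed
    have e2: "norm (1 + exp (2 * complex_of_real x)) = 1 + exp (2*x)"
    proof -
      have "complex_of_real (1 + exp (2*x)) = 1 + exp (complex_of_real (2*x))"
        by (simp only: of_real_add of_real_1 exp_of_real)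
      moreover have "complex_of_real (2*x) = 2 * complex_of_real x" by simp
      ultimately have "1 + exp (2 * complex_of_real x) = complex_of_real (1 + exp (2*x))" by simp
      thus ?thesis by (simp only: norm_of_real) (simp add: add_pos_pos)
    qed
    show "norm (f (sinh (complex_of_real x)) * cosh (complex_of_real x)) \<le> (2 powr (max \<alpha> \<beta>) * K) * (1 + exp (-2*x)) powr (-\<alpha>/2) * (1 + exp (2*x)) powr (-\<beta>/2)"
      using bnd[OF z, of 1] unfolding e1 e2 by simp
  qed
  show ?thesis unfolding LSE_def using an part2 part3 by blast
qed
end
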